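(* Let $G$ be a finite group. Then every subsemigroup of $\mathbb{N}\times G$ is finitely generated; consequently $\mathbb{N}\times G$ has only countably many subsemigroups.
   Context: $\mathbb{N}=\{1,2,3,\dots\}$ is the free monogenic semigroup (positive integers under addition); $\mathbb{N}\times G$ is the direct product with componentwise operation. *)

theory Defs
  imports "HOL-Algebra.Group" "HOL-Library.Countable_Set"
begin

definition NG_carrier :: "('g, 'b) monoid_scheme \<Rightarrow> (nat \<times> 'g) set" where
  "NG_carrier G = {n. n \<ge> 1} \<times> carrier G"

definition NG_mult :: "('g, 'b) monoid_scheme \<Rightarrow> nat \<times> 'g \<Rightarrow> nat \<times> 'g \<Rightarrow> nat \<times> 'g" where
  "NG_mult G x y = (fst x + fst y, snd x \<otimes>\<^bsub>G\<^esub> snd y)"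

definition NG_subsemigroup :: "('g, 'b) monoid_scheme \<Rightarrow> (nat \<times> 'g) set \<Rightarrow> bool" where
  "NG_subsemigroup G S \<longleftrightarrow> S \<subseteq> NG_carrier G \<and> (\<forall>x\<in>S. \<forall>y\<in>S. NG_mult G x y \<in> S)"

inductive_set NG_generated :: "('g, 'b) monoid_scheme \<Rightarrow> (nat \<times> 'g) set \<Rightarrow> (nat \<times> 'g) set"
  for G F where
  gen_base: "x \<in> F \<Longrightarrow> x \<in> NG_generated G F"
| gen_mult: "x \<in> NG_generated G F \<Longrightarrow> y \<in> NG_generated G F \<Longrightarrow> NG_mult G x y \<in> NG_generated G F"

definition NG_fin_gen :: "('g, 'b) monoid_scheme \<Rightarrow> (nat \<times> 'g) set \<Rightarrow> bool" where
  "NG_fin_gen G S \<longleftrightarrow> (\<exists>F. finite F \<and> F \<subseteq> S \<and> NG_generated G F = S)"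

end

theory Submission
  imports Defs "HOL-Algebra.Multiplicative_Group"
begin

lemma pow_in:
  assumes sg: "NG_subsemigroup G S" and grp: "group G" and x: "(a,h) \<in> S"
  shows "(Suc k * a, h [^]\<^bsub>G\<^esub> Suc k) \<in> S"
proof (induction k)
  case 0
  have "h \<in> carrier G" using x sg by (auto simp: NG_subsemigroup_def NG_carrier_def)
  then show ?case using x grp by (simp add: group.is_monoid monoid.nat_pow_Suc)
next
  case (Suc k)
  have h: "h \<in> carrier G" using x sg by (auto simp: NG_subsemigroup_def NG_carrier_def)
  have "NG_mult G (Suc k * a, h [^]\<^bsub>G\<^esub> Suc k) (a,h) \<in> S"
    using Suc x sg by (auto simp: NG_subsemigroup_def)
  moreover have "NG_mult G (Suc k * a, h [^]\<^bsub>G\<^esub> Suc k) (a,h) = (Suc (Suc k) * a, h [^]\<^bsub>G\<^esub> Suc (Suc k))"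
    using grp h by (simp add: NG_mult_def monoid.nat_pow_Suc[of G h "Suc k"] group.is_monoid)
  ultimately show ?case by simp
qed

lemma shift_in:
  assumes sg: "NG_subsemigroup G S" and grp: "group G" and c: "(p, \<one>\<^bsub>G\<^esub>) \<in> S"
    and x: "x \<in> S"
  shows "(fst x + k * p, snd x) \<in> S"
proof (induction k)
  case 0
  then show ?case using x by simp
next
  case (Suc k)
  have h: "snd x \<in> carrier G" using x sg by (auto simp: NG_subsemigroup_def NG_carrier_def)
  have "NG_mult G (fst x + k * p, snd x) (p, \<one>\<^bsub>G\<^esub>) \<in> S"
    using Suc c sg by (auto simp: NG_subsemigroup_def)
  then show ?case using grp h by (simp add: NG_mult_def group.is_monoid add_ac)
qed

lemma fin_gen:
  assumes grp: "group G" and fin: "finite (carrier G)" and sg: "NG_subsemigroup G S"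
  shows "NG_fin_gen G S"
proof (cases "S = {}")
  case True
  have "NG_generated G {} = {}"
  proof -
    have "x \<in> NG_generated G {} \<Longrightarrow> False" for x
      by (induction rule: NG_generated.induct) auto
    then show ?thesis by auto
  qed
  then show ?thesis using True unfolding NG_fin_gen_def by blast
next
  case False
  then obtain a h where ah: "(a,h) \<in> S" by auto
  have h: "h \<in> carrier G" and a1: "a \<ge> 1" using ah sg by (auto simp: NG_subsemigroup_def NG_carrier_def)
  have opos: "0 < order G" using fin grp by (simp add: group.is_monoid monoid.order_gt_0_iff_finite)
  then obtain m where m: "order G = Suc m" by (cases "order G") auto
  define p where "p = order G * a"
  have "(Suc m * a, h [^]\<^bsub>G\<^esub> Suc m) \<in> S" using pow_in[OF sg grp ah] .
  moreover have "h [^]\<^bsub>G\<^esub> order G = \<one>\<^bsub>G\<^esub>"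
    using group.pow_order_eq_1[OF grp] h fin by auto
  ultimately have c: "(p, \<one>\<^bsub>G\<^esub>) \<in> S" unfolding p_def using m by simp
  have ppos: "p \<ge> 1" unfolding p_def using opos a1 by simp
  define F where "F = {x \<in> S. \<not> (fst x > p \<and> (fst x - p, snd x) \<in> S)}"
  have FS: "F \<subseteq> S" unfolding F_def by auto
  define F1 where "F1 = {x \<in> F. fst x \<le> p}"
  define F2 where "F2 = {x \<in> F. fst x > p}"
  have F12: "F = F1 \<union> F2" unfolding F1_def F2_def by auto
  have "F1 \<subseteq> {1..p} \<times> carrier G" unfolding F1_def F_def
    using sg by (auto simp: NG_subsemigroup_def NG_carrier_def)
  hence finF1: "finite F1" using fin by (meson finite_SigmaI finite_atLeastAtMost finite_subset)
  have inj: "inj_on (\<lambda>x. (fst x mod p, snd x)) F2"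
  proof (rule inj_onI)
    fix x y assume xF: "x \<in> F2" and yF: "y \<in> F2" and eq: "(fst x mod p, snd x) = (fst y mod p, snd y)"
    have key: "False" if u: "u \<in> F2" and v: "v \<in> F2" and lt: "fst u < fst v"
        and md: "fst u mod p = fst v mod p" and sn: "snd u = snd v" for u v
    proof -
      have "p dvd fst v - fst u" using lt md mod_eq_dvd_iff_nat[of "fst u" "fst v" p] by simp
      then obtain k where "fst v - fst u = p * k" by (elim dvdE)
      hence k: "fst v = fst u + p * k" using lt by simp
      have "k \<ge> 1" using k lt by (cases k) auto
      then obtain j where j: "k = Suc j" by (cases k) auto
      have uS: "u \<in> S" using u unfolding F2_def F_def by auto
      have "(fst u + j * p, snd u) \<in> S" using shift_in[OF sg grp c uS] .
      moreover have "fst u + j * p = fst v - p" using k j by (simp add: algebra_simps)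
      ultimately have "(fst v - p, snd v) \<in> S" using sn by simp
      thus False using v unfolding F2_def F_def by auto
    qed
    show "x = y"
    proof (cases "fst x = fst y")
      case True then show ?thesis using eq by (simp add: prod_eq_iff)
    next
      case False
      then show ?thesis using key[OF xF yF] key[OF yF xF] eq by (cases "fst x < fst y") auto
    qed
  qed
  have "(\<lambda>x. (fst x mod p, snd x)) ` F2 \<subseteq> {..<p} \<times> carrier G"
    unfolding F2_def F_def using sg ppos by (auto simp: NG_subsemigroup_def NG_carrier_def)
  hence "finite ((\<lambda>x. (fst x mod p, snd x)) ` F2)" using fin by (meson finite_SigmaI finite_lessThan finite_subset)
  hence finF2: "finite F2" using inj finite_imageD by blast
  have finF: "finite F" using F12 finF1 finF2 by simp
  have gsub: "NG_generated G F \<subseteq> S"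
  proof
    fix x assume "x \<in> NG_generated G F"
    then show "x \<in> S"
      by (induction rule: NG_generated.induct) (use FS sg in \<open>auto simp: NG_subsemigroup_def\<close>)
  qed
  have cF: "(p, \<one>\<^bsub>G\<^esub>) \<in> F" using c unfolding F_def by auto
  have all: "\<forall>x. fst x = n \<longrightarrow> x \<in> S \<longrightarrow> x \<in> NG_generated G F" for n
  proof (induction n rule: less_induct)
    case (less n)
    show ?case
    proof (intro allI impI)
      fix x assume xn: "fst x = n" and xS: "x \<in> S"
      show "x \<in> NG_generated G F"
      proof (cases "x \<in> F")
        case True then show ?thesis by (rule gen_base)
      next
        case False
        then have gt: "fst x > p" and yS: "(fst x - p, snd x) \<in> S" using xS unfolding F_def by auto
        have "(fst x - p, snd x) \<in> NG_generated G F"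
          using less.IH[of "fst x - p"] xn gt ppos yS by auto
        hence "NG_mult G (fst x - p, snd x) (p, \<one>\<^bsub>G\<^esub>) \<in> NG_generated G F"
          using cF by (blast intro: gen_mult gen_base)
        moreover have "snd x \<in> carrier G" using xS sg by (auto simp: NG_subsemigroup_def NG_carrier_def)
        ultimately show ?thesis using gt grp by (simp add: NG_mult_def group.is_monoid)
      qed
    qed
  qed
  have "NG_generated G F = S" using gsub all by blast
  then show ?thesis unfolding NG_fin_gen_def using finF FS by blast
qed

theorem lemma3p1:
  fixes G :: "('g, 'b) monoid_scheme"
  assumes "group G" and "finite (carrier G)"
  shows "(\<forall>S. NG_subsemigroup G S \<longrightarrow> NG_fin_gen G S) \<and> countable {S. NG_subsemigroup G S}"
proof
  show A: "\<forall>S. NG_subsemigroup G S \<longrightarrow> NG_fin_gen G S" using fin_gen assms by blast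
  have cc: "countable (NG_carrier G)" unfolding NG_carrier_def
    using assms(2) by (intro countable_SIGMA) (auto intro: countable_finite)
  have "{S. NG_subsemigroup G S} \<subseteq> NG_generated G ` {A. finite A \<and> A \<subseteq> NG_carrier G}"
  proof
    fix S assume "S \<in> {S. NG_subsemigroup G S}"
    then have sg: "NG_subsemigroup G S" by simp
    then obtain F where "finite F" "F \<subseteq> S" "NG_generated G F = S" using A unfolding NG_fin_gen_def by blast
    moreover have "S \<subseteq> NG_carrier G" using sg by (simp add: NG_subsemigroup_def)
    ultimately show "S \<in> NG_generated G ` {A. finite A \<and> A \<subseteq> NG_carrier G}" by blast
  qed
  then show "countable {S. NG_subsemigroup G S}"
    using countable_Collect_finite_subset[OF cc] by (meson countable_image countable_subset)
qed

end
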